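(* Let $\gamma$ be a basic $\ell$-cover of a matroid $\mathcal{M}$ on $[n]$, let $N_\gamma=\prod_i x_i^{\gamma(i)}$ and let $N_\gamma=N_1\cdots N_s$ be its standard form. Set $\gamma_i:=\gamma_{N_i}$ for $1\le i\le s$, $\gamma_{s+1}:=0$, and $\gamma_0:=\gamma_{x_{[n]}}$ (the constant function $1$). Then $$\mathcal{M}(\gamma)=\bigoplus_{i=0}^{s}\mathcal{M}(\gamma)|_{\operatorname{supp}\gamma_i-\operatorname{supp}\gamma_{i+1}}.$$ Hence $\mathcal{M}(\gamma)=\mathcal{M}(\gamma)^0\oplus\mathcal{M}(\gamma)^+$, where $\mathcal{M}(\gamma)^0:=\mathcal{M}(\gamma)|_{[n]-\operatorname{supp}\gamma}$ and $\mathcal{M}(\gamma)^+:=\mathcal{M}(\gamma)|_{\operatorname{supp}\gamma}=\bigoplus_{i=1}^s\mathcal{M}(\gamma)|_{\operatorname{supp}\gamma_i-\operatorname{supp}\gamma_{i+1}}$. In particular, every basis $F$ of $\mathcal{M}(\gamma)^+$ satisfies $F\subseteq\operatorname{supp}\gamma$ and $\gamma(F)=\ell$, and $\gamma(G)=0$ for every basis $G$ of $\mathcal{M}(\gamma)^0$.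
   Context: Matroids are identified with their independence complexes. For $\gamma:[n]\to\mathbb{N}_0$ and $S\subseteq[n]$, $\gamma(S)=\sum_{i\in S}\gamma(i)$, $\operatorname{supp}\gamma=\{i:\gamma(i)>0\}$. $\gamma$ is an $\ell$-cover of $\mathcal{M}$ if $\gamma(F)\ge\ell$ for every basis $F$, basic if minimal among $\ell$-covers in the pointwise order. $\mathcal{M}(\gamma)$ (the focal matroid) is the complex generated by the bases $F$ with $\gamma(F)=\ell$; it is a matroid. For a monomial $N=\prod x_i^{a_i}$, $\gamma_N(i)=a_i$; $x_{[n]}=x_1\cdots x_n$. The standard form of a monomial $N$ is the unique factorization $N=N_1\cdots N_s$ into squarefree monomials $N_i\neq1$ with $\operatorname{supp}N_1\supseteq\cdots\supseteq\operatorname{supp}N_s$. $\mathcal{M}|_A$ is the restriction to $A$ (independent sets of $\mathcal{M}$ contained in $A$), and $\oplus$ is the direct sum of matroids on disjoint ground sets. *)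

theory Defs
  imports Main
begin

(* Ground set [n] = {1..n}; a matroid is identified with its independence complex. *)
definition matroid :: "nat set \<Rightarrow> nat set set \<Rightarrow> bool" where
  "matroid E M \<longleftrightarrow> finite E \<and> M \<subseteq> Pow E \<and> {} \<in> M
     \<and> (\<forall>X\<in>M. \<forall>Y. Y \<subseteq> X \<longrightarrow> Y \<in> M)
     \<and> (\<forall>X\<in>M. \<forall>Y\<in>M. card X < card Y \<longrightarrow> (\<exists>y\<in>Y - X. insert y X \<in> M))"

definition bases :: "nat set set \<Rightarrow> nat set set" where
  "bases M = {B \<in> M. \<forall>X\<in>M. B \<subseteq> X \<longrightarrow> X = B}"

definition supp :: "(nat \<Rightarrow> nat) \<Rightarrow> nat set" where
  "supp \<gamma> = {i. \<gamma> i > 0}"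

(* gamma : [n] -> N_0, represented as a function nat => nat vanishing outside [n] *)
definition is_cover :: "nat \<Rightarrow> nat set set \<Rightarrow> nat \<Rightarrow> (nat \<Rightarrow> nat) \<Rightarrow> bool" where
  "is_cover n M l \<gamma> \<longleftrightarrow> (\<forall>i. i \<notin> {1..n} \<longrightarrow> \<gamma> i = 0)
     \<and> (\<forall>F\<in>bases M. sum \<gamma> F \<ge> l)"

definition basic_cover :: "nat \<Rightarrow> nat set set \<Rightarrow> nat \<Rightarrow> (nat \<Rightarrow> nat) \<Rightarrow> bool" where
  "basic_cover n M l \<gamma> \<longleftrightarrow> is_cover n M l \<gamma>
     \<and> (\<forall>\<delta>. is_cover n M l \<delta> \<and> \<delta> \<le> \<gamma> \<longrightarrow> \<delta> = \<gamma>)"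

(* the focal matroid M(gamma): complex generated by bases F with gamma(F) = l *)
definition focal :: "nat set set \<Rightarrow> nat \<Rightarrow> (nat \<Rightarrow> nat) \<Rightarrow> nat set set" where
  "focal M l \<gamma> = {I. \<exists>F\<in>bases M. sum \<gamma> F = l \<and> I \<subseteq> F}"

definition restr :: "nat set set \<Rightarrow> nat set \<Rightarrow> nat set set" where
  "restr M A = {I \<in> M. I \<subseteq> A}"

definition dsum :: "nat set \<Rightarrow> (nat \<Rightarrow> nat set set) \<Rightarrow> nat set set" where
  "dsum K C = {\<Union>i\<in>K. X i | X. \<forall>i\<in>K. X i \<in> C i}"

definition dsum2 :: "nat set set \<Rightarrow> nat set set \<Rightarrow> nat set set" where
  "dsum2 A B = {X \<union> Y | X Y. X \<in> A \<and> Y \<in> B}"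

(* Standard form N_gamma = N_1 ... N_s: the squarefree monomial N_i <> 1 is represented
   by its (nonempty) support As!(i-1) \<subseteq> [n]; supports are decreasing, and the
   product has exponent vector gamma. *)
definition standard_form :: "nat \<Rightarrow> (nat \<Rightarrow> nat) \<Rightarrow> nat set list \<Rightarrow> bool" where
  "standard_form n \<gamma> As \<longleftrightarrow> (\<forall>A\<in>set As. A \<noteq> {} \<and> A \<subseteq> {1..n})
     \<and> (\<forall>i j. i < j \<and> j < length As \<longrightarrow> As ! j \<subseteq> As ! i)
     \<and> (\<forall>x. \<gamma> x = card {i. i < length As \<and> x \<in> As ! i})"

end

theory Submission
  imports Defs
begin


lemma mat_fin: "matroid E M \<Longrightarrow> X \<in> M \<Longrightarrow> finite X"
  unfolding matroid_def by (meson PowD finite_subset subsetD)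
lemma mat_sub: "matroid E M \<Longrightarrow> X \<in> M \<Longrightarrow> Y \<subseteq> X \<Longrightarrow> Y \<in> M"
  unfolding matroid_def by blast
lemma mat_aug: "matroid E M \<Longrightarrow> X \<in> M \<Longrightarrow> Y \<in> M \<Longrightarrow> card X < card Y \<Longrightarrow> \<exists>y\<in>Y-X. insert y X \<in> M"
  unfolding matroid_def by blast
lemma mat_E: "matroid E M \<Longrightarrow> X \<in> M \<Longrightarrow> X \<subseteq> E"
  unfolding matroid_def by blast
lemma mat_empty: "matroid E M \<Longrightarrow> {} \<in> M"
  unfolding matroid_def by blast

definition maxind :: "nat set set \<Rightarrow> nat set \<Rightarrow> nat set \<Rightarrow> bool" where
  "maxind M U A \<longleftrightarrow> A \<in> M \<and> A \<subseteq> U \<and> (\<forall>w\<in>U - A. insert w A \<notin> M)"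

lemma aug_star:
  assumes m: "matroid E M" and "A \<in> M" "X \<in> M"
  shows "\<exists>Z \<subseteq> X - A. A \<union> Z \<in> M \<and> card X \<le> card (A \<union> Z)"
  using assms(2)
proof (induction "card X - card A" arbitrary: A rule: less_induct)
  case less
  show ?case
  proof (cases "card X \<le> card A")
    case True thus ?thesis using less.prems by (intro exI[of _ "{}"]) auto
  next
    case False
    then obtain y where y: "y \<in> X - A" "insert y A \<in> M"
      using mat_aug[OF m less.prems \<open>X \<in> M\<close>] by auto
    have fA: "finite A" using mat_fin[OF m less.prems] .
    have "card (insert y A) = Suc (card A)" using y fA by simp
    hence "card X - card (insert y A) < card X - card A" using False by simp
    from less.hyps[OF this y(2)] obtain Z where
      Z: "Z \<subseteq> X - insert y A" "insert y A \<union> Z \<in> M" "card X \<le> card (insert y A \<union> Z)" by blast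
    show ?thesis using Z y by (intro exI[of _ "insert y Z"]) auto
  qed
qed

lemma maxind_card_le:
  assumes m: "matroid E M" and a: "maxind M U A" and w: "W \<in> M" "W \<subseteq> U"
  shows "card W \<le> card A"
proof (rule ccontr)
  assume "\<not> ?thesis"
  then obtain y where "y \<in> W - A" "insert y A \<in> M" using mat_aug[OF m _ w(1), of A] a
    unfolding maxind_def by auto
  thus False using a w unfolding maxind_def by auto
qed

lemma maxind_by_card:
  assumes m: "matroid E M" and a: "maxind M U A" and d: "D \<in> M" "D \<subseteq> U" "card A \<le> card D"
  shows "maxind M U D"
  unfolding maxind_def
proof (intro conjI ballI d(1,2) notI)
  fix w assume w: "w \<in> U - D" "insert w D \<in> M"
  have "card (insert w D) = Suc (card D)" using w mat_fin[OF m d(1)] by simp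
  moreover have "card (insert w D) \<le> card A" using maxind_card_le[OF m a w(2)] w d by auto
  ultimately show False using d by simp
qed

lemma span_exch:
  assumes m: "matroid E M" and a: "maxind M U A" and a': "maxind M U A'"
    and q: "Q \<inter> U = {}" and aq: "A \<union> Q \<in> M"
  shows "A' \<union> Q \<in> M"
proof -
  obtain Z where Z: "Z \<subseteq> (A \<union> Q) - A'" "A' \<union> Z \<in> M" "card (A \<union> Q) \<le> card (A' \<union> Z)"
    using aug_star[OF m _ aq, of A'] a' unfolding maxind_def by blast
  have fQ: "finite Q" "finite A" using mat_fin[OF m aq] by auto
  have fA': "finite A'" using mat_fin[OF m] a' unfolding maxind_def by blast
  have ZA: "Z \<inter> A = {}"
  proof (rule ccontr)
    assume "Z \<inter> A \<noteq> {}"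
    then obtain w where w: "w \<in> Z" "w \<in> A" by blast
    have "insert w A' \<in> M" using mat_sub[OF m Z(2)] w by blast
    moreover have "w \<in> U - A'" using w Z a unfolding maxind_def by blast
    ultimately show False using a' unfolding maxind_def by blast
  qed
  hence ZQ: "Z \<subseteq> Q" using Z by blast
  have "card A = card A'"
    using maxind_card_le[OF m a, of A'] maxind_card_le[OF m a', of A] a a' unfolding maxind_def by auto
  have "card (A \<union> Q) = card A + card Q" using q a fQ unfolding maxind_def
    by (subst card_Un_disjoint) auto
  moreover have "card (A' \<union> Z) \<le> card A' + card Z" by (rule card_Un_le)
  ultimately have "card Q \<le> card Z" using Z(3) \<open>card A = card A'\<close> by simp
  hence "Z = Q" using ZQ fQ by (meson card_seteq)
  thus ?thesis using Z by simp
qed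

lemma bases_maxind:
  assumes m: "matroid E M"
  shows "B \<in> bases M \<longleftrightarrow> maxind M E B"
proof
  assume b: "B \<in> bases M"
  show "maxind M E B" unfolding maxind_def
    using b mat_E[OF m] unfolding bases_def by blast
next
  assume b: "maxind M E B"
  show "B \<in> bases M" unfolding bases_def
  proof (intro CollectI conjI ballI impI)
    show "B \<in> M" using b unfolding maxind_def by blast
    fix X assume x: "X \<in> M" "B \<subseteq> X"
    show "X = B"
    proof (rule ccontr)
      assume "X \<noteq> B"
      then obtain w where w: "w \<in> X" "w \<notin> B" using x by blast
      have "insert w B \<in> M" using mat_sub[OF m x(1)] w x by blast
      moreover have "w \<in> E" using mat_E[OF m x(1)] w by blast
      ultimately show False using b w unfolding maxind_def by blast
    qed
  qed
qed

lemma exch: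
  assumes m: "matroid E M" and c: "C \<in> bases M" and Y: "Y \<in> M" and y: "y \<in> Y" "y \<notin> C"
  shows "\<exists>x\<in>C - Y. insert y (C - {x}) \<in> M"
proof -
  have cM: "C \<in> M" using c unfolding bases_def by blast
  have fC: "finite C" using mat_fin[OF m cM] .
  define Y' where "Y' = insert y (C \<inter> Y)"
  have Y'M: "Y' \<in> M" unfolding Y'_def by (rule mat_sub[OF m Y]) (use y in blast)
  obtain Z where Z: "Z \<subseteq> C - Y'" "Y' \<union> Z \<in> M" "card C \<le> card (Y' \<union> Z)"
    using aug_star[OF m Y'M cM] by blast
  define W where "W = Y' \<union> Z"
  have WC: "W \<subseteq> insert y C" using Z unfolding W_def Y'_def by blast
  have "W \<noteq> insert y C"
  proof
    assume a: "W = insert y C"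
    have "W \<in> M" unfolding W_def by (rule Z(2))
    hence "insert y C \<in> M" unfolding a .
    hence "insert y C = C" using c unfolding bases_def by blast
    thus False using y by blast
  qed
  then obtain x where x: "x \<in> insert y C" "x \<notin> W" using WC by blast
  have yW: "y \<in> W" unfolding W_def Y'_def by blast
  have xy: "x \<noteq> y" using x(2) yW by blast
  have xC1: "x \<in> C" using x(1) xy by blast
  have "C \<inter> Y \<subseteq> W" unfolding W_def Y'_def by blast
  hence xC2: "x \<notin> Y" using x(2) xC1 by blast
  note xC = xC1 xC2
  have WS: "W \<subseteq> insert y (C - {x})" using WC x by blast
  have cpos: "card C > 0" using xC1 fC card_gt_0_iff by blast
  have "card (insert y (C - {x})) = Suc (card (C - {x}))"
    using y(2) fC by (subst card_insert_disjoint) auto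
  also have "\<dots> = card C" using card_Diff_singleton[OF xC1] cpos by simp
  finally have cc: "card (insert y (C - {x})) = card C" .
  have "W = insert y (C - {x})"
  proof (rule card_seteq)
    show "finite (insert y (C - {x}))" using fC by simp
    show "W \<subseteq> insert y (C - {x})" by (rule WS)
    show "card (insert y (C - {x})) \<le> card W" using cc Z(3) unfolding W_def by simp
  qed
  moreover have "W \<in> M" unfolding W_def by (rule Z(2))
  ultimately show ?thesis using xC by auto
qed

lemma step:
  assumes m: "matroid E M" and uu: "U' \<subseteq> U" and d': "maxind M U' D'" and q: "Q \<subseteq> U - U'" "Q \<subseteq> B"
    and b: "B \<in> M" "maxind M U' (B \<inter> U')" "maxind M U (B \<inter> U)"
  shows "\<exists>D. maxind M U D \<and> D' \<union> Q \<subseteq> D \<and> D \<inter> U' = D'"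
proof -
  have bq: "(B \<inter> U') \<union> Q \<in> M" by (rule mat_sub[OF m b(1)]) (use q in blast)
  have qu: "Q \<inter> U' = {}" using q by blast
  have dq: "D' \<union> Q \<in> M" by (rule span_exch[OF m b(2) d' qu bq])
  have bu: "B \<inter> U \<in> M" using b(3) unfolding maxind_def by blast
  obtain Z where Z: "Z \<subseteq> (B \<inter> U) - (D' \<union> Q)" "D' \<union> Q \<union> Z \<in> M" "card (B \<inter> U) \<le> card (D' \<union> Q \<union> Z)"
    using aug_star[OF m dq bu] by blast
  define D where "D = D' \<union> Q \<union> Z"
  have D'U: "D' \<subseteq> U'" using d' unfolding maxind_def by blast
  have DU: "D \<subseteq> U" unfolding D_def using Z(1) q(1) D'U uu by blast
  have md: "maxind M U D" using maxind_by_card[OF m b(3) _ DU] Z(2,3) unfolding D_def by blast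
  have "D \<inter> U' = D'"
  proof
    show "D' \<subseteq> D \<inter> U'" using D'U unfolding D_def by blast
    show "D \<inter> U' \<subseteq> D'"
    proof
      fix w assume w: "w \<in> D \<inter> U'"
      show "w \<in> D'"
      proof (rule ccontr)
        assume nw: "w \<notin> D'"
        have "insert w D' \<subseteq> D" using w unfolding D_def by blast
        hence "insert w D' \<in> M" using mat_sub[OF m Z(2)] unfolding D_def by blast
        thus False using d' w nw unfolding maxind_def by blast
      qed
    qed
  qed
  thus ?thesis using md unfolding D_def by blast
qed



lemma G_lem:
  assumes m: "matroid {1..n} M" and cov: "is_cover n M l \<gamma>" and c: "C \<in> bases M" "sum \<gamma> C = l"
  shows "maxind M {x\<in>{1..n}. \<gamma> x \<le> k} (C \<inter> {x\<in>{1..n}. \<gamma> x \<le> k})"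
proof -
  let ?U = "{x\<in>{1..n}. \<gamma> x \<le> k}"
  have cM: "C \<in> M" using c unfolding bases_def by blast
  have fC: "finite C" using mat_fin[OF m cM] .
  have CE: "C \<subseteq> {1..n}" using mat_E[OF m cM] .
  have cm: "maxind M {1..n} C" using bases_maxind[OF m] c by blast
  show ?thesis unfolding maxind_def
  proof (intro conjI ballI notI)
    show "C \<inter> ?U \<in> M" by (rule mat_sub[OF m cM]) blast
    show "C \<inter> ?U \<subseteq> ?U" by blast
    fix w assume w: "w \<in> ?U - C \<inter> ?U" and wm: "insert w (C \<inter> ?U) \<in> M"
    have wC: "w \<notin> C" using w by blast
    obtain x where x: "x \<in> C - insert w (C \<inter> ?U)" "insert w (C - {x}) \<in> M"
      using exch[OF m c(1) wm _ wC] by blast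
    have xC: "x \<in> C" using x by blast
    have gx: "\<gamma> x > k" using x CE by auto
    have gw: "\<gamma> w \<le> k" using w by blast
    let ?C' = "insert w (C - {x})"
    have cc: "card ?C' = card C"
    proof -
      have cpos: "card C > 0" using xC fC card_gt_0_iff by blast
      have "card ?C' = Suc (card (C - {x}))" using wC fC by (subst card_insert_disjoint) auto
      also have "\<dots> = card C" using card_Diff_singleton[OF xC] cpos by simp
      finally show ?thesis .
    qed
    have "maxind M {1..n} ?C'"
      by (rule maxind_by_card[OF m cm x(2)]) (use CE w cc in auto)
    hence "?C' \<in> bases M" using bases_maxind[OF m] by blast
    hence ge: "sum \<gamma> ?C' \<ge> l" using cov unfolding is_cover_def by blast
    have s1: "sum \<gamma> ?C' = \<gamma> w + sum \<gamma> (C - {x})" using wC fC by (subst sum.insert) auto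
    have s2: "sum \<gamma> C = \<gamma> x + sum \<gamma> (C - {x})" by (rule sum.remove[OF fC xC])
    show False using ge s1 s2 c(2) gx gw by linarith
  qed
qed

lemma ind_sum: "(\<Sum>j<s. if j < (g::nat) then (1::nat) else 0) = min g s"
  by (induction s) auto

lemma sum_levels:
  assumes "finite D" "\<forall>x. \<gamma> x \<le> s"
  shows "sum \<gamma> D = (\<Sum>j<s. card {x\<in>D. j < \<gamma> x})"
proof -
  have "sum \<gamma> D = (\<Sum>x\<in>D. \<Sum>j<s. if j < \<gamma> x then (1::nat) else 0)"
    using assms(2) by (intro sum.cong) (auto simp: ind_sum min_def)
  also have "\<dots> = (\<Sum>j<s. \<Sum>x\<in>D. if j < \<gamma> x then (1::nat) else 0)" by (rule sum.swap)
  also have "\<dots> = (\<Sum>j<s. card {x\<in>D. j < \<gamma> x})"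
    using assms(1) by (intro sum.cong) (simp_all add: sum.inter_filter[symmetric])
  finally show ?thesis .
qed


lemma focal_basis:
  assumes "I \<in> focal M l \<gamma>" obtains B where "B \<in> bases M" "sum \<gamma> B = l" "I \<subseteq> B"
  using assms unfolding focal_def by auto

lemma build:
  assumes m: "matroid {1..n} M" and cov: "is_cover n M l \<gamma>"
    and X: "\<forall>i\<le>k. X i \<in> focal M l \<gamma> \<and> X i \<subseteq> {x\<in>{1..n}. \<gamma> x = i}"
  shows "\<exists>D. maxind M {x\<in>{1..n}. \<gamma> x \<le> k} D
     \<and> (\<forall>j\<le>k. maxind M {x\<in>{1..n}. \<gamma> x \<le> j} (D \<inter> {x\<in>{1..n}. \<gamma> x \<le> j}))
     \<and> (\<Union>i\<le>k. X i) \<subseteq> D"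
  using X
proof (induction k)
  case 0
  have X0: "X 0 \<in> focal M l \<gamma>" "X 0 \<subseteq> {x\<in>{1..n}. \<gamma> x = 0}" using 0 by auto
  obtain B where B: "B \<in> bases M" "sum \<gamma> B = l" "X 0 \<subseteq> B"
    using focal_basis[OF X0(1)] by blast
  have BM: "B \<in> M" using B unfolding bases_def by blast
  have e: "maxind M {} {}" unfolding maxind_def using mat_empty[OF m] by blast
  have e2: "maxind M {} (B \<inter> {})" using e by simp
  have q0: "X 0 \<subseteq> {x\<in>{1..n}. \<gamma> x \<le> 0} - {}" using X0(2) by auto
  obtain D where D: "maxind M {x\<in>{1..n}. \<gamma> x \<le> 0} D" "{} \<union> X 0 \<subseteq> D"
    using step[OF m _ e q0 B(3) BM e2 G_lem[OF m cov B(1,2)]] by blast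
  have DU: "D \<subseteq> {x\<in>{1..n}. \<gamma> x \<le> 0}" using D unfolding maxind_def by blast
  show ?case
  proof (intro exI conjI allI impI)
    show "maxind M {x\<in>{1..n}. \<gamma> x \<le> 0} D" by (rule D(1))
    fix j :: nat assume "j \<le> 0"
    hence "D \<inter> {x\<in>{1..n}. \<gamma> x \<le> j} = D" using DU by auto
    thus "maxind M {x\<in>{1..n}. \<gamma> x \<le> j} (D \<inter> {x\<in>{1..n}. \<gamma> x \<le> j})" using D(1) \<open>j \<le> 0\<close> by simp
  next
    show "(\<Union>i\<le>0. X i) \<subseteq> D" using D(2) by simp
  qed
next
  case (Suc k)
  from Suc.prems have Xk: "\<forall>i\<le>k. X i \<in> focal M l \<gamma> \<and> X i \<subseteq> {x\<in>{1..n}. \<gamma> x = i}" by simp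
  from Suc.IH[OF Xk] obtain D' where D': "maxind M {x\<in>{1..n}. \<gamma> x \<le> k} D'"
     "\<forall>j\<le>k. maxind M {x\<in>{1..n}. \<gamma> x \<le> j} (D' \<inter> {x\<in>{1..n}. \<gamma> x \<le> j})"
     "(\<Union>i\<le>k. X i) \<subseteq> D'" by blast
  have XS: "X (Suc k) \<in> focal M l \<gamma>" "X (Suc k) \<subseteq> {x\<in>{1..n}. \<gamma> x = Suc k}" using Suc.prems by auto
  obtain B where B: "B \<in> bases M" "sum \<gamma> B = l" "X (Suc k) \<subseteq> B"
    using focal_basis[OF XS(1)] by blast
  have BM: "B \<in> M" using B unfolding bases_def by blast
  have q: "X (Suc k) \<subseteq> {x\<in>{1..n}. \<gamma> x \<le> Suc k} - {x\<in>{1..n}. \<gamma> x \<le> k}" using XS(2) by auto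
  have uu: "{x\<in>{1..n}. \<gamma> x \<le> k} \<subseteq> {x\<in>{1..n}. \<gamma> x \<le> Suc k}" by auto
  obtain D where D: "maxind M {x\<in>{1..n}. \<gamma> x \<le> Suc k} D" "D' \<union> X (Suc k) \<subseteq> D"
      "D \<inter> {x\<in>{1..n}. \<gamma> x \<le> k} = D'"
    using step[OF m uu D'(1) q B(3) BM G_lem[OF m cov B(1,2)] G_lem[OF m cov B(1,2)]] by blast
  have DU: "D \<subseteq> {x\<in>{1..n}. \<gamma> x \<le> Suc k}" using D unfolding maxind_def by blast
  show ?case
  proof (intro exI conjI allI impI)
    show "maxind M {x\<in>{1..n}. \<gamma> x \<le> Suc k} D" by (rule D(1))
    fix j :: nat assume j: "j \<le> Suc k"
    show "maxind M {x\<in>{1..n}. \<gamma> x \<le> j} (D \<inter> {x\<in>{1..n}. \<gamma> x \<le> j})"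
    proof (cases "j = Suc k")
      case True
      hence "D \<inter> {x\<in>{1..n}. \<gamma> x \<le> j} = D" using DU by auto
      thus ?thesis using D(1) True by simp
    next
      case False
      hence jk: "j \<le> k" using j by simp
      have "D \<inter> {x\<in>{1..n}. \<gamma> x \<le> j} = D \<inter> {x\<in>{1..n}. \<gamma> x \<le> k} \<inter> {x\<in>{1..n}. \<gamma> x \<le> j}"
        using jk by auto
      also have "\<dots> = D' \<inter> {x\<in>{1..n}. \<gamma> x \<le> j}" using D(3) by simp
      finally show ?thesis using D'(2) jk by simp
    qed
  next
    have "(\<Union>i\<le>Suc k. X i) = (\<Union>i\<le>k. X i) \<union> X (Suc k)" by (simp add: atMost_Suc Un_commute)
    thus "(\<Union>i\<le>Suc k. X i) \<subseteq> D" using D(2) D'(3) by blast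
  qed
qed

lemma union_focal:
  assumes m: "matroid {1..n} M" and cov: "is_cover n M l \<gamma>" and gs: "\<forall>x. \<gamma> x \<le> s"
    and X: "\<forall>i\<le>s. X i \<in> focal M l \<gamma> \<and> X i \<subseteq> {x\<in>{1..n}. \<gamma> x = i}"
  shows "(\<Union>i\<le>s. X i) \<in> focal M l \<gamma>"
proof -
  obtain D where D: "maxind M {x\<in>{1..n}. \<gamma> x \<le> s} D"
     "\<forall>j\<le>s. maxind M {x\<in>{1..n}. \<gamma> x \<le> j} (D \<inter> {x\<in>{1..n}. \<gamma> x \<le> j})"
     "(\<Union>i\<le>s. X i) \<subseteq> D" using build[OF m cov X] by blast
  have Us: "{x\<in>{1..n}. \<gamma> x \<le> s} = {1..n}" using gs by auto
  have Dm: "maxind M {1..n} D" using D(1) Us by simp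
  hence DB: "D \<in> bases M" using bases_maxind[OF m] by blast
  have X0: "X 0 \<in> focal M l \<gamma>" using X by blast
  obtain C where C: "C \<in> bases M" "sum \<gamma> C = l" using focal_basis[OF X0] by blast
  have Cm: "maxind M {1..n} C" using bases_maxind[OF m] C by blast
  have DM: "D \<in> M" "C \<in> M" using Dm Cm unfolding maxind_def by auto
  have fin: "finite D" "finite C" using mat_fin[OF m] DM by auto
  have DE: "D \<subseteq> {1..n}" "C \<subseteq> {1..n}" using Dm Cm unfolding maxind_def by auto
  have cDC: "card D = card C"
    using maxind_card_le[OF m Dm DM(2) DE(2)] maxind_card_le[OF m Cm DM(1) DE(1)] by simp
  have eq: "card {x\<in>D. j < \<gamma> x} = card {x\<in>C. j < \<gamma> x}" if j: "j < s" for j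
  proof -
    let ?U = "{x\<in>{1..n}. \<gamma> x \<le> j}"
    have m1: "maxind M ?U (D \<inter> ?U)" using D(2) j by simp
    have m2: "maxind M ?U (C \<inter> ?U)" using G_lem[OF m cov C] .
    have ci: "card (D \<inter> ?U) = card (C \<inter> ?U)"
      using maxind_card_le[OF m m1, of "C \<inter> ?U"] maxind_card_le[OF m m2, of "D \<inter> ?U"] m1 m2
      unfolding maxind_def by auto
    have "{x\<in>D. j < \<gamma> x} = D - ?U" "{x\<in>C. j < \<gamma> x} = C - ?U" using DE by auto
    moreover have "card (D - ?U) = card D - card (D \<inter> ?U)" using fin by (intro card_Diff_subset_Int) auto
    moreover have "card (C - ?U) = card C - card (C \<inter> ?U)" using fin by (intro card_Diff_subset_Int) auto
    ultimately show ?thesis using ci cDC by simp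
  qed
  have "sum \<gamma> D = sum \<gamma> C"
    using sum_levels[OF fin(1) gs] sum_levels[OF fin(2) gs] eq by simp
  thus ?thesis using DB C D(3) unfolding focal_def by auto
qed

lemma exists_basis:
  assumes m: "matroid E M" shows "\<exists>B. B \<in> bases M"
proof -
  have "finite M" using m unfolding matroid_def by (meson finite_Pow_iff finite_subset)
  moreover have "M \<noteq> {}" using mat_empty[OF m] by blast
  ultimately obtain B where "B \<in> M" "\<forall>X\<in>M. B \<le> X \<longrightarrow> B = X"
    using finite_has_maximal by metis
  thus ?thesis unfolding bases_def by blast
qed

lemma focal_exists:
  assumes m: "matroid {1..n} M" and b: "basic_cover n M l \<gamma>"
  shows "\<exists>C\<in>bases M. sum \<gamma> C = l"
proof (rule ccontr)
  assume na: "\<not> ?thesis"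
  have cov: "is_cover n M l \<gamma>" using b unfolding basic_cover_def by blast
  have gt: "\<forall>F\<in>bases M. sum \<gamma> F > l" using cov na unfolding is_cover_def by force
  obtain B where B: "B \<in> bases M" using exists_basis[OF m] by blast
  show False
  proof (cases "\<forall>i. \<gamma> i = 0")
    case True
    hence "sum \<gamma> B = 0" by simp
    thus False using gt B by auto
  next
    case False
    then obtain i where i: "\<gamma> i > 0" by auto
    define \<delta> where "\<delta> = \<gamma>(i := \<gamma> i - 1)"
    have le: "\<delta> \<le> \<gamma>" unfolding \<delta>_def le_fun_def by auto
    have ne: "\<delta> \<noteq> \<gamma>" using i unfolding \<delta>_def by (metis diff_less fun_upd_same less_irrefl zero_less_one)
    have "is_cover n M l \<delta>" unfolding is_cover_def
    proof (intro conjI allI impI ballI)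
      fix j assume "j \<notin> {1..n}"
      thus "\<delta> j = 0" using cov unfolding is_cover_def \<delta>_def by auto
    next
      fix F assume F: "F \<in> bases M"
      have fF: "finite F" using F mat_fin[OF m] unfolding bases_def by blast
      have "sum \<gamma> F \<le> sum \<delta> F + 1"
      proof (cases "i \<in> F")
        case True
        have "sum \<gamma> F = \<gamma> i + sum \<gamma> (F - {i})" by (rule sum.remove[OF fF True])
        moreover have "sum \<delta> F = \<delta> i + sum \<delta> (F - {i})" by (rule sum.remove[OF fF True])
        moreover have "sum \<delta> (F - {i}) = sum \<gamma> (F - {i})" unfolding \<delta>_def by (intro sum.cong) auto
        ultimately show ?thesis unfolding \<delta>_def by simp
      next
        case False
        have "sum \<delta> F = sum \<gamma> F" unfolding \<delta>_def using False by (intro sum.cong) auto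
        thus ?thesis by simp
      qed
      thus "l \<le> sum \<delta> F" using gt F by fastforce
    qed
    thus False using b le ne unfolding basic_cover_def by blast
  qed
qed



theorem theorem3p7:
  fixes n l :: nat and \<gamma> :: "nat \<Rightarrow> nat" and M :: "nat set set" and As :: "nat set list"
  assumes "matroid {1..n} M"
    and "basic_cover n M l \<gamma>"
    and "standard_form n \<gamma> As"
  defines "s \<equiv> length As"
    and "S \<equiv> (\<lambda>i. if i = 0 then {1..n} else if i \<le> length As then As ! (i - 1) else {})"
    and "M0 \<equiv> restr (focal M l \<gamma>) ({1..n} - supp \<gamma>)"
    and "Mp \<equiv> restr (focal M l \<gamma>) (supp \<gamma>)"
  shows "focal M l \<gamma> = dsum {0..s} (\<lambda>i. restr (focal M l \<gamma>) (S i - S (Suc i)))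
    \<and> focal M l \<gamma> = dsum2 M0 Mp
    \<and> Mp = dsum {1..s} (\<lambda>i. restr (focal M l \<gamma>) (S i - S (Suc i)))
    \<and> (\<forall>F\<in>bases Mp. F \<subseteq> supp \<gamma> \<and> sum \<gamma> F = l)
    \<and> (\<forall>G\<in>bases M0. sum \<gamma> G = 0)"
proof -
  note m = assms(1)
  have cov: "is_cover n M l \<gamma>" using assms(2) unfolding basic_cover_def by blast
  have gz: "\<And>x. x \<notin> {1..n} \<Longrightarrow> \<gamma> x = 0" using cov unfolding is_cover_def by blast
  have gz': "\<And>x. 0 < \<gamma> x \<Longrightarrow> x \<in> {1..n}" using gz by (metis less_irrefl)
  have sf1: "\<And>j. j < s \<Longrightarrow> As ! j \<subseteq> {1..n}" using assms(3) unfolding standard_form_def s_def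
    by (meson nth_mem)
  have sf2: "\<And>i j. i < j \<Longrightarrow> j < s \<Longrightarrow> As ! j \<subseteq> As ! i" using assms(3) unfolding standard_form_def s_def
    by blast
  have sf3: "\<And>x. \<gamma> x = card {i. i < s \<and> x \<in> As ! i}" using assms(3) unfolding standard_form_def s_def
    by blast
  have gs: "\<forall>x. \<gamma> x \<le> s"
  proof
    fix x
    have "card {i. i < s \<and> x \<in> As ! i} \<le> card {..<s}" by (intro card_mono) auto
    thus "\<gamma> x \<le> s" using sf3[of x] by simp
  qed
  have key: "\<And>x j. j < s \<Longrightarrow> x \<in> As ! j \<longleftrightarrow> j < \<gamma> x"
  proof -
    fix x j assume j: "j < s"
    define D where "D = {i. i < s \<and> x \<in> As ! i}"
    have fD: "finite D" unfolding D_def by simp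
    have gD: "\<gamma> x = card D" using sf3 D_def by simp
    show "x \<in> As ! j \<longleftrightarrow> j < \<gamma> x"
    proof
      assume x: "x \<in> As ! j"
      have "{..j} \<subseteq> D" unfolding D_def
      proof
        fix i assume "i \<in> {..j}"
        hence "i \<le> j" by simp
        thus "i \<in> {i. i < s \<and> x \<in> As ! i}" using x j sf2[of i j] by (cases "i = j") auto
      qed
      hence "card {..j} \<le> card D" using fD by (rule card_mono[rotated])
      thus "j < \<gamma> x" using gD by simp
    next
      assume lt: "j < \<gamma> x"
      show "x \<in> As ! j"
      proof (rule ccontr)
        assume nx: "x \<notin> As ! j"
        have "D \<subseteq> {..<j}"
        proof
          fix i assume i: "i \<in> D"
          show "i \<in> {..<j}"
          proof (rule ccontr)
            assume "i \<notin> {..<j}"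
            hence "j \<le> i" by simp
            moreover have "i < s" "x \<in> As ! i" using i D_def by auto
            ultimately show False using nx sf2[of j i] by (cases "i = j") auto
          qed
        qed
        hence "card D \<le> j" using card_mono[of "{..<j}" D] by simp
        thus False using lt gD by simp
      qed
    qed
  qed
  have Sx: "\<And>i. S i = {x\<in>{1..n}. i \<le> \<gamma> x}"
  proof -
    fix i
    show "S i = {x\<in>{1..n}. i \<le> \<gamma> x}"
    proof (cases "i = 0")
      case True thus ?thesis unfolding S_def by auto
    next
      case False
      show ?thesis
      proof (cases "i \<le> s")
        case True
        have "S i = As ! (i - 1)" using False True unfolding S_def s_def by simp
        also have "\<dots> = {x\<in>{1..n}. i \<le> \<gamma> x}"
          using key[of "i - 1"] sf1[of "i - 1"] gz' False True by fastforce
        finally show ?thesis .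
      next
        case F2: False
        have "S i = {}" using False F2 unfolding S_def s_def by simp
        thus ?thesis using gs F2 by (auto simp: not_le) (meson le_trans not_le)
      qed
    qed
  qed
  define L where "L = (\<lambda>i. {x\<in>{1..n}. \<gamma> x = i})"
  have blk: "\<And>i. S i - S (Suc i) = L i" unfolding Sx L_def by auto
  have suppe: "supp \<gamma> = {x\<in>{1..n}. 0 < \<gamma> x}" unfolding supp_def using gz by fastforce
  have L0: "{1..n} - supp \<gamma> = L 0" unfolding suppe L_def by auto
  define N where "N = focal M l \<gamma>"
  have NE: "\<And>I. I \<in> N \<Longrightarrow> I \<subseteq> {1..n}"
    unfolding N_def focal_def bases_def using mat_E[OF m] by blast
  have Nsub: "\<And>I J. I \<in> N \<Longrightarrow> J \<subseteq> I \<Longrightarrow> J \<in> N"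
    unfolding N_def focal_def by blast
  have Lsub: "\<And>i. L i \<subseteq> {x\<in>{1..n}. \<gamma> x = i}" unfolding L_def by simp
  have UF: "\<And>X. \<forall>i\<le>s. X i \<in> N \<and> X i \<subseteq> L i \<Longrightarrow> (\<Union>i\<le>s. X i) \<in> N"
    unfolding N_def L_def by (rule union_focal[OF m cov gs]) 
  obtain C0 where C0: "C0 \<in> bases M" "sum \<gamma> C0 = l" using focal_exists[OF m assms(2)] by blast
  have emN: "{} \<in> N" using C0 unfolding N_def focal_def by blast
  have decomp: "\<And>I. I \<subseteq> {1..n} \<Longrightarrow> I = (\<Union>i\<in>{0..s}. I \<inter> L i)"
    unfolding L_def using gs by auto
  have P1: "N = dsum {0..s} (\<lambda>i. restr N (L i))"
  proof
    show "N \<subseteq> dsum {0..s} (\<lambda>i. restr N (L i))"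
    proof
      fix I assume I: "I \<in> N"
      have "\<forall>i\<in>{0..s}. I \<inter> L i \<in> restr N (L i)" using Nsub[OF I] unfolding restr_def by blast
      thus "I \<in> dsum {0..s} (\<lambda>i. restr N (L i))" unfolding dsum_def
        using decomp[OF NE[OF I]] by blast
    qed
  next
    show "dsum {0..s} (\<lambda>i. restr N (L i)) \<subseteq> N"
    proof
      fix Y assume "Y \<in> dsum {0..s} (\<lambda>i. restr N (L i))"
      then obtain X where X: "Y = (\<Union>i\<in>{0..s}. X i)" "\<forall>i\<in>{0..s}. X i \<in> restr N (L i)"
        unfolding dsum_def by blast
      have "\<forall>i\<le>s. X i \<in> N \<and> X i \<subseteq> L i" using X(2) unfolding restr_def by auto
      from UF[OF this] show "Y \<in> N" using X(1) by (simp add: atLeast0AtMost)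
    qed
  qed
  have P3: "Mp = dsum {1..s} (\<lambda>i. restr N (L i))"
  proof
    show "Mp \<subseteq> dsum {1..s} (\<lambda>i. restr N (L i))"
    proof
      fix I assume I: "I \<in> Mp"
      hence IN: "I \<in> N" and Is: "I \<subseteq> supp \<gamma>" unfolding Mp_def N_def restr_def by auto
      have "\<forall>i\<in>{1..s}. I \<inter> L i \<in> restr N (L i)" using Nsub[OF IN] unfolding restr_def by blast
      moreover have "I = (\<Union>i\<in>{1..s}. I \<inter> L i)" using Is gs unfolding suppe L_def
        by auto
      ultimately show "I \<in> dsum {1..s} (\<lambda>i. restr N (L i))" unfolding dsum_def by blast
    qed
  next
    show "dsum {1..s} (\<lambda>i. restr N (L i)) \<subseteq> Mp"
    proof
      fix Y assume "Y \<in> dsum {1..s} (\<lambda>i. restr N (L i))"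
      then obtain X where X: "Y = (\<Union>i\<in>{1..s}. X i)" "\<forall>i\<in>{1..s}. X i \<in> restr N (L i)"
        unfolding dsum_def by blast
      define Z where "Z = (\<lambda>i. if i = 0 then {} else X i)"
      have "\<forall>i\<le>s. Z i \<in> N \<and> Z i \<subseteq> L i" using X(2) emN unfolding restr_def Z_def by auto
      from UF[OF this] have "(\<Union>i\<le>s. Z i) \<in> N" .
      moreover have "(\<Union>i\<le>s. Z i) = Y" unfolding X(1) Z_def by (auto split: if_splits) (metis Suc_leI atLeastAtMost_iff)
      moreover have "Y \<subseteq> supp \<gamma>" using X unfolding restr_def suppe L_def by fastforce
      ultimately show "Y \<in> Mp" unfolding Mp_def N_def restr_def by auto
    qed
  qed
  have P2: "N = dsum2 M0 Mp"
  proof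
    show "N \<subseteq> dsum2 M0 Mp"
    proof
      fix I assume I: "I \<in> N"
      have "I = (I \<inter> ({1..n} - supp \<gamma>)) \<union> (I \<inter> supp \<gamma>)" using NE[OF I] by auto
      moreover have "I \<inter> ({1..n} - supp \<gamma>) \<in> M0" "I \<inter> supp \<gamma> \<in> Mp"
        using Nsub[OF I] unfolding M0_def Mp_def N_def[symmetric] restr_def by auto
      ultimately show "I \<in> dsum2 M0 Mp" unfolding dsum2_def by blast
    qed
  next
    show "dsum2 M0 Mp \<subseteq> N"
    proof
      fix W assume "W \<in> dsum2 M0 Mp"
      then obtain X Y where XY: "W = X \<union> Y" "X \<in> M0" "Y \<in> Mp" unfolding dsum2_def by blast
      have X: "X \<in> N" "X \<subseteq> L 0" using XY(2) L0 unfolding M0_def N_def[symmetric] restr_def by auto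
      have Y: "Y \<in> N" "Y \<subseteq> supp \<gamma>" using XY(3) unfolding Mp_def N_def[symmetric] restr_def by auto
      define Z where "Z = (\<lambda>i. if i = 0 then X else Y \<inter> L i)"
      have "\<forall>i\<le>s. Z i \<in> N \<and> Z i \<subseteq> L i" using X Y Nsub unfolding Z_def by auto
      from UF[OF this] have "(\<Union>i\<le>s. Z i) \<in> N" .
      moreover have "(\<Union>i\<le>s. Z i) = X \<union> Y"
      proof
        show "(\<Union>i\<le>s. Z i) \<subseteq> X \<union> Y" unfolding Z_def by auto
        show "X \<union> Y \<subseteq> (\<Union>i\<le>s. Z i)"
        proof
          fix x assume "x \<in> X \<union> Y"
          thus "x \<in> (\<Union>i\<le>s. Z i)"
          proof
            assume "x \<in> X" thus ?thesis unfolding Z_def by (intro UN_I[of 0]) auto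
          next
            assume x: "x \<in> Y"
            hence "x \<in> {1..n}" "0 < \<gamma> x" using Y(2) suppe by auto
            thus ?thesis unfolding Z_def using x gs L_def by (intro UN_I[of "\<gamma> x"]) auto
          qed
        qed
      qed
      ultimately show "W \<in> N" using XY(1) by simp
    qed
  qed
  have P4: "\<forall>F\<in>bases Mp. F \<subseteq> supp \<gamma> \<and> sum \<gamma> F = l"
  proof
    fix F assume F: "F \<in> bases Mp"
    have FM: "F \<in> Mp" using F unfolding bases_def by blast
    hence Fs: "F \<subseteq> supp \<gamma>" and FN: "F \<in> N" unfolding Mp_def N_def restr_def by auto
    obtain C where C: "C \<in> bases M" "sum \<gamma> C = l" "F \<subseteq> C" using FN unfolding N_def focal_def by blast
    have "C \<inter> supp \<gamma> \<in> Mp" unfolding Mp_def restr_def focal_def using C by blast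
    moreover have "F \<subseteq> C \<inter> supp \<gamma>" using C(3) Fs by blast
    moreover have "\<forall>X\<in>Mp. F \<subseteq> X \<longrightarrow> X = F" using F unfolding bases_def by simp
    ultimately have eq: "C \<inter> supp \<gamma> = F" by blast
    have fC: "finite C" using C(1) mat_fin[OF m] unfolding bases_def by blast
    have "sum \<gamma> C = sum \<gamma> (C \<inter> supp \<gamma>)"
      by (rule sum.mono_neutral_right[OF fC]) (auto simp: supp_def)
    thus "F \<subseteq> supp \<gamma> \<and> sum \<gamma> F = l" using eq Fs C(2) by simp
  qed
  have P5: "\<forall>G\<in>bases M0. sum \<gamma> G = 0"
  proof
    fix G assume "G \<in> bases M0"
    hence "G \<in> M0" unfolding bases_def by simp
    hence "G \<subseteq> {1..n} - supp \<gamma>" unfolding M0_def restr_def by simp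
    hence "\<forall>x\<in>G. \<gamma> x = 0" unfolding supp_def by auto
    thus "sum \<gamma> G = 0" by simp
  qed
  show ?thesis unfolding N_def[symmetric] blk by (intro conjI P1 P2 P3 P4 P5)
qed

end
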